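(* Let QS4 be the modal predicate calculus obtained from classical predicate calculus by adding a unary connective $\Box$ with axiom schemes $\Box p\to p$, $\Box p\to\Box\Box p$, $\Box(p\to q)\to(\Box p\to\Box q)$ and the rule $p\,/\,\Box p$. Define a translation $A\mapsto A_\Box$ from formulas of QHC to formulas of QS4 by recursion: atomic propositions are unchanged, and $0_\Box=0$; $\bot_\Box=0$; each atomic problem $\pi(t_1,\dots,t_n)\neq\bot$ is sent to $\Box\bar\pi(t_1,\dots,t_n)$, where $\bar\pi$ is a proposition variable of the same arity assigned injectively to $\pi$ (and distinct from the proposition variables of QHC); classical connectives and quantifiers are kept; intuitionistic $\land,\lor,\exists$ become the classical ones ($(\alpha\land\beta)_\Box=\alpha_\Box\land\beta_\Box$, etc.); intuitionistic $\to$ and $\forall$ become classical and prefixed by $\Box$: $(\alpha\to\beta)_\Box=\Box(\alpha_\Box\to\beta_\Box)$, $(\forall x\,\alpha)_\Box=\Box\forall x\,\alpha_\Box$; $(?\alpha)_\Box=\alpha_\Box$; $(!p)_\Box=\Box p_\Box$. Then if $A_1,\dots,A_n\vdash_{\mathrm{QHC}} A$, we have $(A_1)_\Box,\dots,(A_n)_\Box\vdash_{\mathrm{QS4}} A_\Box$.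
   Context: QHC is a two-sorted first-order calculus. Its only terms are individual variables. Every formula is either a problem (denoted by Greek letters $\alpha,\beta,\gamma,\dots$) or a proposition (denoted by Latin letters $p,q,\dots$). Atomic formulas are proposition variables $p(t_1,\dots,t_n)$ (of proposition type), problem variables $\pi(t_1,\dots,t_n)$ (of problem type), and the constants $0$ (a proposition, classical falsity) and $\bot$ (a problem, intuitionistic absurdity). Propositions are closed under the classical connectives $\land,\lor,\to$ and quantifiers $\exists,\forall$; problems are closed under the intuitionistic connectives $\land,\lor,\to$ and quantifiers $\exists,\forall$ (the same symbols are used, distinguished by the type of the arguments). $\neg p$ abbreviates $p\to 0$, $\neg\alpha$ abbreviates $\alpha\to\bot$, and $\leftrightarrow$ is defined as usual. There are two type-conversion operators: if $p$ is a proposition then $!p$ is a problem, and if $\alpha$ is a problem then $?\alpha$ is a proposition. Deductive system of QHC: all axioms and rules of classical predicate logic applied to all propositions; all postulates and rules of intuitionistic predicate logic applied to all problems; the rules $p\,/\,!p$ and $\alpha\,/\,?\alpha$; and the schemas $?!p\to p$; $\alpha\to\, !?\alpha$; $!(p\to q)\to(!p\to !q)$; $?(\alpha\to\beta)\to(?\alpha\to ?\beta)$; $!0\to\bot$; $?(\alpha\land\beta)\leftrightarrow ?\alpha\land ?\beta$; $?(\alpha\lor\beta)\leftrightarrow ?\alpha\lor ?\beta$; $?\bot\to 0$; $?\exists x\,\alpha(x)\leftrightarrow\exists x\,?\alpha(x)$; $?\forall x\,\alpha(x)\to\forall x\,?\alpha(x)$ (usual variable side conditions implicit). $\vdash A$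 means $A$ is derivable in QHC; $A\Rightarrow B$ means $\vdash A\to B$ and $A\Leftrightarrow B$ means $\vdash A\leftrightarrow B$ (with $A,B$ of the same type); $A\vdash B$ means $B$ is derivable in QHC from the premise $A$. Notation: $\Box p := ?!p$ (a proposition) and $\nabla\alpha := !?\alpha$ (a problem). QC and QH denote classical and intuitionistic predicate calculus. *)

theory Defs
  imports Main
begin

text \<open>Individual variables are natural numbers (de Bruijn indices); a quantifier binds
index 0 of its body.\<close>

datatype pform =
    PAtom nat "nat list"
  | PFalse
  | PConj pform pform
  | PDisj pform pform
  | PImp pform pform
  | PEx pform
  | PAll pform
  | PQue qform
and qform =
    QAtom nat "nat list"
  | QBot
  | QConj qform qform
  | QDisj qform qform
  | QImp qform qform
  | QEx qform
  | QAll qform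
  | QBang pform

datatype form = FP pform | FQ qform

definition up :: "(nat \<Rightarrow> nat) \<Rightarrow> nat \<Rightarrow> nat" where
  "up s = (\<lambda>k. case k of 0 \<Rightarrow> 0 | Suc j \<Rightarrow> Suc (s j))"

definition inst0 :: "nat \<Rightarrow> nat \<Rightarrow> nat" where
  "inst0 t = (\<lambda>k. case k of 0 \<Rightarrow> t | Suc j \<Rightarrow> j)"

primrec substP :: "(nat \<Rightarrow> nat) \<Rightarrow> pform \<Rightarrow> pform"
and substQ :: "(nat \<Rightarrow> nat) \<Rightarrow> qform \<Rightarrow> qform" where
  "substP s (PAtom n ts) = PAtom n (map s ts)"
| "substP s PFalse = PFalse"
| "substP s (PConj a b) = PConj (substP s a) (substP s b)"
| "substP s (PDisj a b) = PDisj (substP s a) (substP s b)"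
| "substP s (PImp a b) = PImp (substP s a) (substP s b)"
| "substP s (PEx a) = PEx (substP (up s) a)"
| "substP s (PAll a) = PAll (substP (up s) a)"
| "substP s (PQue a) = PQue (substQ s a)"
| "substQ s (QAtom n ts) = QAtom n (map s ts)"
| "substQ s QBot = QBot"
| "substQ s (QConj a b) = QConj (substQ s a) (substQ s b)"
| "substQ s (QDisj a b) = QDisj (substQ s a) (substQ s b)"
| "substQ s (QImp a b) = QImp (substQ s a) (substQ s b)"
| "substQ s (QEx a) = QEx (substQ (up s) a)"
| "substQ s (QAll a) = QAll (substQ (up s) a)"
| "substQ s (QBang p) = QBang (substP s p)"

definition PNeg :: "pform \<Rightarrow> pform" where "PNeg p = PImp p PFalse"
definition PIff :: "pform \<Rightarrow> pform \<Rightarrow> pform" where "PIff p q = PConj (PImp p q) (PImp q p)"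

inductive cl_axP :: "pform \<Rightarrow> bool" where
  "cl_axP (PImp a (PImp b a))"
| "cl_axP (PImp (PImp a (PImp b c)) (PImp (PImp a b) (PImp a c)))"
| "cl_axP (PImp (PConj a b) a)"
| "cl_axP (PImp (PConj a b) b)"
| "cl_axP (PImp a (PImp b (PConj a b)))"
| "cl_axP (PImp a (PDisj a b))"
| "cl_axP (PImp b (PDisj a b))"
| "cl_axP (PImp (PImp a c) (PImp (PImp b c) (PImp (PDisj a b) c)))"
| "cl_axP (PImp PFalse a)"
| "cl_axP (PImp (PNeg (PNeg a)) a)"
| "cl_axP (PImp (PAll a) (substP (inst0 t) a))"
| "cl_axP (PImp (substP (inst0 t) a) (PEx a))"

inductive int_axQ :: "qform \<Rightarrow> bool" where
  "int_axQ (QImp a (QImp b a))"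
| "int_axQ (QImp (QImp a (QImp b c)) (QImp (QImp a b) (QImp a c)))"
| "int_axQ (QImp (QConj a b) a)"
| "int_axQ (QImp (QConj a b) b)"
| "int_axQ (QImp a (QImp b (QConj a b)))"
| "int_axQ (QImp a (QDisj a b))"
| "int_axQ (QImp b (QDisj a b))"
| "int_axQ (QImp (QImp a c) (QImp (QImp b c) (QImp (QDisj a b) c)))"
| "int_axQ (QImp QBot a)"
| "int_axQ (QImp (QAll a) (substQ (inst0 t) a))"
| "int_axQ (QImp (substQ (inst0 t) a) (QEx a))"

inductive qhc_axP :: "pform \<Rightarrow> bool" where
  "qhc_axP (PImp (PQue (QBang p)) p)"
| "qhc_axP (PImp (PQue (QImp a b)) (PImp (PQue a) (PQue b)))"
| "qhc_axP (PIff (PQue (QConj a b)) (PConj (PQue a) (PQue b)))"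
| "qhc_axP (PIff (PQue (QDisj a b)) (PDisj (PQue a) (PQue b)))"
| "qhc_axP (PImp (PQue QBot) PFalse)"
| "qhc_axP (PIff (PQue (QEx a)) (PEx (PQue a)))"
| "qhc_axP (PImp (PQue (QAll a)) (PAll (PQue a)))"

inductive qhc_axQ :: "qform \<Rightarrow> bool" where
  "qhc_axQ (QImp a (QBang (PQue a)))"
| "qhc_axQ (QImp (QBang (PImp p q)) (QImp (QBang p) (QBang q)))"
| "qhc_axQ (QImp (QBang PFalse) QBot)"

text \<open>Generalization-type rules use the
de Bruijn form: from C' \<longrightarrow> A infer C \<longrightarrow> \<forall>A, where C' is C shifted (so the
generalized variable does not occur free in C).\<close>
inductive qhc_der :: "form set \<Rightarrow> form \<Rightarrow> bool" for \<Gamma> where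
  qhc_prem: "A \<in> \<Gamma> \<Longrightarrow> qhc_der \<Gamma> A"
| qhc_clax: "cl_axP p \<Longrightarrow> qhc_der \<Gamma> (FP p)"
| qhc_intax: "int_axQ a \<Longrightarrow> qhc_der \<Gamma> (FQ a)"
| qhc_axp: "qhc_axP p \<Longrightarrow> qhc_der \<Gamma> (FP p)"
| qhc_axq: "qhc_axQ a \<Longrightarrow> qhc_der \<Gamma> (FQ a)"
| qhc_mpP: "qhc_der \<Gamma> (FP (PImp p q)) \<Longrightarrow> qhc_der \<Gamma> (FP p) \<Longrightarrow> qhc_der \<Gamma> (FP q)"
| qhc_mpQ: "qhc_der \<Gamma> (FQ (QImp a b)) \<Longrightarrow> qhc_der \<Gamma> (FQ a) \<Longrightarrow> qhc_der \<Gamma> (FQ b)"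
| qhc_genP: "qhc_der \<Gamma> (FP (PImp (substP Suc c) p)) \<Longrightarrow> qhc_der \<Gamma> (FP (PImp c (PAll p)))"
| qhc_exP: "qhc_der \<Gamma> (FP (PImp p (substP Suc c))) \<Longrightarrow> qhc_der \<Gamma> (FP (PImp (PEx p) c))"
| qhc_genQ: "qhc_der \<Gamma> (FQ (QImp (substQ Suc c) a)) \<Longrightarrow> qhc_der \<Gamma> (FQ (QImp c (QAll a)))"
| qhc_exQ: "qhc_der \<Gamma> (FQ (QImp a (substQ Suc c))) \<Longrightarrow> qhc_der \<Gamma> (FQ (QImp (QEx a) c))"
| qhc_bang: "qhc_der \<Gamma> (FP p) \<Longrightarrow> qhc_der \<Gamma> (FQ (QBang p))"
| qhc_que: "qhc_der \<Gamma> (FQ a) \<Longrightarrow> qhc_der \<Gamma> (FP (PQue a))"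

datatype 'n mform =
    MAtom 'n "nat list"
  | MFalse
  | MConj "'n mform" "'n mform"
  | MDisj "'n mform" "'n mform"
  | MImp "'n mform" "'n mform"
  | MEx "'n mform"
  | MAll "'n mform"
  | MBox "'n mform"

primrec substM :: "(nat \<Rightarrow> nat) \<Rightarrow> 'n mform \<Rightarrow> 'n mform" where
  "substM s (MAtom n ts) = MAtom n (map s ts)"
| "substM s MFalse = MFalse"
| "substM s (MConj a b) = MConj (substM s a) (substM s b)"
| "substM s (MDisj a b) = MDisj (substM s a) (substM s b)"
| "substM s (MImp a b) = MImp (substM s a) (substM s b)"
| "substM s (MEx a) = MEx (substM (up s) a)"
| "substM s (MAll a) = MAll (substM (up s) a)"
| "substM s (MBox a) = MBox (substM s a)"

definition MNeg :: "'n mform \<Rightarrow> 'n mform" where "MNeg p = MImp p MFalse"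

inductive cl_axM :: "'n mform \<Rightarrow> bool" where
  "cl_axM (MImp a (MImp b a))"
| "cl_axM (MImp (MImp a (MImp b c)) (MImp (MImp a b) (MImp a c)))"
| "cl_axM (MImp (MConj a b) a)"
| "cl_axM (MImp (MConj a b) b)"
| "cl_axM (MImp a (MImp b (MConj a b)))"
| "cl_axM (MImp a (MDisj a b))"
| "cl_axM (MImp b (MDisj a b))"
| "cl_axM (MImp (MImp a c) (MImp (MImp b c) (MImp (MDisj a b) c)))"
| "cl_axM (MImp MFalse a)"
| "cl_axM (MImp (MNeg (MNeg a)) a)"
| "cl_axM (MImp (MAll a) (substM (inst0 t) a))"
| "cl_axM (MImp (substM (inst0 t) a) (MEx a))"

inductive s4_axM :: "'n mform \<Rightarrow> bool" where
  "s4_axM (MImp (MBox p) p)"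
| "s4_axM (MImp (MBox p) (MBox (MBox p)))"
| "s4_axM (MImp (MBox (MImp p q)) (MImp (MBox p) (MBox q)))"

inductive qs4_der :: "'n mform set \<Rightarrow> 'n mform \<Rightarrow> bool" for \<Gamma> where
  qs4_prem: "A \<in> \<Gamma> \<Longrightarrow> qs4_der \<Gamma> A"
| qs4_clax: "cl_axM p \<Longrightarrow> qs4_der \<Gamma> p"
| qs4_s4ax: "s4_axM p \<Longrightarrow> qs4_der \<Gamma> p"
| qs4_mp: "qs4_der \<Gamma> (MImp p q) \<Longrightarrow> qs4_der \<Gamma> p \<Longrightarrow> qs4_der \<Gamma> q"
| qs4_gen: "qs4_der \<Gamma> (MImp (substM Suc c) p) \<Longrightarrow> qs4_der \<Gamma> (MImp c (MAll p))"
| qs4_ex: "qs4_der \<Gamma> (MImp p (substM Suc c)) \<Longrightarrow> qs4_der \<Gamma> (MImp (MEx p) c)"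
| qs4_nec: "qs4_der \<Gamma> p \<Longrightarrow> qs4_der \<Gamma> (MBox p)"

text \<open>Proposition variable p_n goes to Inl n; the fresh variable \<pi>-bar for problem
variable \<pi>_n is Inr n (injective, disjoint from the image of proposition variables).\<close>
primrec trP :: "pform \<Rightarrow> (nat + nat) mform"
and trQ :: "qform \<Rightarrow> (nat + nat) mform" where
  "trP (PAtom n ts) = MAtom (Inl n) ts"
| "trP PFalse = MFalse"
| "trP (PConj a b) = MConj (trP a) (trP b)"
| "trP (PDisj a b) = MDisj (trP a) (trP b)"
| "trP (PImp a b) = MImp (trP a) (trP b)"
| "trP (PEx a) = MEx (trP a)"
| "trP (PAll a) = MAll (trP a)"
| "trP (PQue a) = trQ a"
| "trQ (QAtom n ts) = MBox (MAtom (Inr n) ts)"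
| "trQ QBot = MFalse"
| "trQ (QConj a b) = MConj (trQ a) (trQ b)"
| "trQ (QDisj a b) = MDisj (trQ a) (trQ b)"
| "trQ (QImp a b) = MBox (MImp (trQ a) (trQ b))"
| "trQ (QEx a) = MEx (trQ a)"
| "trQ (QAll a) = MBox (MAll (trQ a))"
| "trQ (QBang p) = MBox (trP p)"

primrec tr :: "form \<Rightarrow> (nat + nat) mform" where
  "tr (FP p) = trP p"
| "tr (FQ a) = trQ a"

end

theory Submission
  imports Defs
begin

lemma up_id: "up id = id"
  by (auto simp: up_def fun_eq_iff split: nat.splits)

lemma up_id': "up (\<lambda>x. x) = (\<lambda>x. x)"
  using up_id by (simp add: id_def)

lemma substM_id: "substM id a = a"
  unfolding id_def by (induction a) (auto simp: up_id')

lemma inst0_upSuc: "inst0 0 \<circ> up Suc = id"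
  by (auto simp: up_def inst0_def fun_eq_iff split: nat.splits)

lemma up_comp: "up s \<circ> up t = up (s \<circ> t)"
  by (auto simp: up_def fun_eq_iff split: nat.splits)

lemma substM_comp: "substM s (substM t a) = substM (s \<circ> t) a"
  by (induction a arbitrary: s t) (simp_all add: up_comp)

lemma subst_back: "substM (inst0 0) (substM (up Suc) a) = a"
  by (simp add: substM_comp inst0_upSuc substM_id)

lemma tr_subst: "trP (substP s p) = substM s (trP p)" "trQ (substQ s q) = substM s (trQ q)"
  by (induction p and q arbitrary: s and s) simp_all

lemma axK: "qs4_der G (MImp a (MImp b a))" by (rule qs4_clax) (rule cl_axM.intros)
lemma axS: "qs4_der G (MImp (MImp a (MImp b c)) (MImp (MImp a b) (MImp a c)))"
  by (rule qs4_clax) (rule cl_axM.intros)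
lemma axT: "qs4_der G (MImp (MBox p) p)" by (rule qs4_s4ax) (rule s4_axM.intros)
lemma ax4: "qs4_der G (MImp (MBox p) (MBox (MBox p)))" by (rule qs4_s4ax) (rule s4_axM.intros)
lemma axKb: "qs4_der G (MImp (MBox (MImp p q)) (MImp (MBox p) (MBox q)))"
  by (rule qs4_s4ax) (rule s4_axM.intros)

lemma mpI: "qs4_der G (MImp a a)"
  by (rule qs4_mp[OF qs4_mp[OF axS axK] axK[where a=a and b=a]])

lemma weak: "qs4_der G q \<Longrightarrow> qs4_der G (MImp p q)"
  by (rule qs4_mp[OF axK])

lemma trans: "qs4_der G (MImp p q) \<Longrightarrow> qs4_der G (MImp q r) \<Longrightarrow> qs4_der G (MImp p r)"
  by (rule qs4_mp[OF qs4_mp[OF axS weak]])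

lemma Slift: "qs4_der G (MImp A (MImp B C)) \<Longrightarrow>
   qs4_der G (MImp (MImp x A) (MImp (MImp x B) (MImp x C)))"
  by (rule trans[OF qs4_mp[OF axS weak] axS])

lemma post: "qs4_der G (MImp A (MImp B C)) \<Longrightarrow> qs4_der G (MImp C D) \<Longrightarrow>
   qs4_der G (MImp A (MImp B D))"
  by (rule trans, assumption, rule qs4_mp[OF axS weak])

lemma boxmono: "qs4_der G (MImp p q) \<Longrightarrow> qs4_der G (MImp (MBox p) (MBox q))"
  by (rule qs4_mp[OF axKb qs4_nec])

fun imps :: "'n mform list \<Rightarrow> 'n mform \<Rightarrow> 'n mform" where
  "imps [] F = F"
| "imps (h#H) F = MImp h (imps H F)"

lemma liftH: "qs4_der G F \<Longrightarrow> qs4_der G (imps H F)"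
  by (induction H) (auto intro: weak)

lemma distrH: "qs4_der G (MImp (imps H (MImp p q)) (MImp (imps H p) (imps H q)))"
  by (induction H) (auto intro: mpI Slift)

lemma mpH: "qs4_der G (imps H (MImp p q)) \<Longrightarrow> qs4_der G (imps H p) \<Longrightarrow> qs4_der G (imps H q)"
  by (rule qs4_mp[OF qs4_mp[OF distrH]])

lemma appH: "qs4_der G (MImp p q) \<Longrightarrow> qs4_der G (imps H p) \<Longrightarrow> qs4_der G (imps H q)"
  by (rule mpH[OF liftH])

lemma app2H: "qs4_der G (MImp p (MImp q r)) \<Longrightarrow> qs4_der G (imps H p) \<Longrightarrow> qs4_der G (imps H q)
   \<Longrightarrow> qs4_der G (imps H r)"
  by (rule mpH[OF appH])

lemma headH: "qs4_der G (MImp x (imps H x))"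
  by (induction H) (auto intro: mpI trans axK)

lemma hypH: "h \<in> set H \<Longrightarrow> qs4_der G (imps H h)"
proof (induction H)
  case (Cons x H)
  then show ?case using headH weak by (cases "h = x") auto
qed auto

lemma boxK: "qs4_der G (MImp (MBox (imps H F)) (imps (map MBox H) (MBox F)))"
proof (induction H)
  case Nil then show ?case by (simp add: mpI)
next
  case (Cons x H) then show ?case by (simp, intro post[OF axKb])
qed

lemma cutH: "qs4_der G (imps H (imps K F)) \<Longrightarrow> (\<forall>k\<in>set K. qs4_der G (imps H k)) \<Longrightarrow>
   qs4_der G (imps H F)"
proof (induction K)
  case (Cons k K)
  have 1: "qs4_der G (imps H (MImp k (imps K F)))" using Cons.prems(1) by simp
  have 2: "qs4_der G (imps H k)" using Cons.prems(2) by simp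
  have "qs4_der G (imps H (imps K F))" by (rule mpH[OF 1 2])
  moreover have "\<forall>k\<in>set K. qs4_der G (imps H k)" using Cons.prems(2) by simp
  ultimately show ?case by (rule Cons.IH)
qed auto

lemma boxI: "(\<forall>h\<in>set H. qs4_der G (MImp h (MBox h))) \<Longrightarrow> qs4_der G (imps H F) \<Longrightarrow>
   qs4_der G (imps H (MBox F))"
proof -
  assume st: "\<forall>h\<in>set H. qs4_der G (MImp h (MBox h))" and d: "qs4_der G (imps H F)"
  have "qs4_der G (imps (map MBox H) (MBox F))"
    using boxK qs4_nec[OF d] qs4_mp by blast
  hence "qs4_der G (imps H (imps (map MBox H) (MBox F)))" by (rule liftH)
  moreover have "\<forall>k\<in>set (map MBox H). qs4_der G (imps H k)"
  proof
    fix k assume "k \<in> set (map MBox H)"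
    then obtain h where h: "h \<in> set H" "k = MBox h" by auto
    show "qs4_der G (imps H k)" using h st appH[OF _ hypH[OF h(1)]] by blast
  qed
  ultimately show ?thesis by (rule cutH)
qed

lemma conjI': "qs4_der G a \<Longrightarrow> qs4_der G b \<Longrightarrow> qs4_der G (MConj a b)"
  by (rule qs4_mp[OF qs4_mp[OF qs4_clax[OF cl_axM.intros(5)]]])

lemma stab: "qs4_der G (MImp (trQ a) (MBox (trQ a)))"
proof (induction a rule: qform.induct[where ?P1.0="\<lambda>_. True"])
  case (QAtom x1 x2) then show ?case by (simp add: ax4)
next
  case QBot then show ?case by (simp add: qs4_clax cl_axM.intros)
next
  case (QConj a b)
  let ?A = "trQ a" and ?B = "trQ b"
  have "qs4_der G (imps [MConj ?A ?B] (MBox ?A))"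
    using QConj.IH(1) by (meson appH hypH list.set_intros(1) qs4_clax cl_axM.intros(3))
  moreover have "qs4_der G (imps [MConj ?A ?B] (MBox ?B))"
    using QConj.IH(2) by (meson appH hypH list.set_intros(1) qs4_clax cl_axM.intros(4))
  moreover have "qs4_der G (MImp (MBox ?A) (MImp (MBox ?B) (MBox (MConj ?A ?B))))"
    by (meson axKb boxmono cl_axM.intros(5) qs4_clax trans)
  ultimately have "qs4_der G (imps [MConj ?A ?B] (MBox (MConj ?A ?B)))" by (meson app2H)
  then show ?case by simp
next
  case (QDisj a b)
  let ?A = "trQ a" and ?B = "trQ b"
  have 1: "qs4_der G (MImp ?A (MBox (MDisj ?A ?B)))"
    using QDisj.IH(1) by (meson boxmono cl_axM.intros(6) qs4_clax trans)
  have 2: "qs4_der G (MImp ?B (MBox (MDisj ?A ?B)))"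
    using QDisj.IH(2) by (meson boxmono cl_axM.intros(7) qs4_clax trans)
  show ?case using 1 2 by simp (meson cl_axM.intros(8) qs4_clax qs4_mp)
next
  case (QImp a b) then show ?case by (simp add: ax4)
next
  case (QEx a)
  let ?A = "trQ a"
  have "qs4_der G (MImp (substM (inst0 0) (substM (up Suc) ?A)) (MEx (substM (up Suc) ?A)))"
    by (rule qs4_clax) (rule cl_axM.intros)
  hence "qs4_der G (MImp ?A (MEx (substM (up Suc) ?A)))" by (simp add: subst_back)
  hence "qs4_der G (MImp ?A (MBox (MEx (substM (up Suc) ?A))))"
    using QEx.IH boxmono trans by blast
  hence "qs4_der G (MImp (MEx ?A) (MBox (MEx ?A)))"
    by (intro qs4_ex) simp
  then show ?case by simp
next
  case (QAll a) then show ?case by (simp add: ax4)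
next
  case (QBang x) then show ?case by (simp add: ax4)
qed simp_all

lemma stabB: "qs4_der G (MImp (MBox p) (MBox (MBox p)))" by (rule ax4)

lemma trPNeg: "trP (PNeg a) = MNeg (trP a)" by (simp add: PNeg_def MNeg_def)

lemma clax_tr: "cl_axP p \<Longrightarrow> cl_axM (trP p)"
  by (induction rule: cl_axP.induct) (auto simp: tr_subst trPNeg intro: cl_axM.intros)

lemma intax_tr: "int_axQ a \<Longrightarrow> qs4_der G (trQ a)"
proof (induction rule: int_axQ.induct)
  case (1 a b)
  have "qs4_der G (imps [trQ a] (MImp (trQ b) (trQ a)))" by (simp add: axK)
  hence "qs4_der G (imps [trQ a] (MBox (MImp (trQ b) (trQ a))))" by (intro boxI) (auto simp: stab)
  then show ?case by (simp add: qs4_nec)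
next
  case (2 a b c)
  let ?A = "trQ a" and ?B = "trQ b" and ?C = "trQ c"
  let ?P = "MBox (MImp ?A (MBox (MImp ?B ?C)))" and ?Q = "MBox (MImp ?A ?B)"
  let ?H = "[?P, ?Q, ?A]"
  have hA: "qs4_der G (imps ?H ?A)" by (rule hypH) simp
  have "qs4_der G (imps ?H (MImp ?A (MBox (MImp ?B ?C))))" by (meson appH axT hypH list.set_intros(1))
  hence "qs4_der G (imps ?H (MImp ?B ?C))" using hA by (meson appH axT mpH)
  moreover have "qs4_der G (imps ?H (MImp ?A ?B))" by (rule appH[OF axT]) (rule hypH, simp)
  hence "qs4_der G (imps ?H ?B)" using hA by (meson mpH)
  ultimately have "qs4_der G (imps ?H ?C)" by (meson mpH)
  hence "qs4_der G (imps [?P, ?Q] (MImp ?A ?C))" by simp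
  hence "qs4_der G (imps [?P, ?Q] (MBox (MImp ?A ?C)))" by (intro boxI) (auto simp: stabB)
  hence "qs4_der G (imps [?P] (MImp ?Q (MBox (MImp ?A ?C))))" by simp
  hence "qs4_der G (imps [?P] (MBox (MImp ?Q (MBox (MImp ?A ?C)))))" by (intro boxI) (auto simp: stabB)
  then show ?case by (simp add: qs4_nec)
next
  case (3 a b) then show ?case by (simp, rule qs4_nec, rule qs4_clax, rule cl_axM.intros)
next
  case (4 a b) then show ?case by (simp, rule qs4_nec, rule qs4_clax, rule cl_axM.intros)
next
  case (5 a b)
  let ?A = "trQ a" and ?B = "trQ b"
  have "qs4_der G (imps [?A, ?B] (MConj ?A ?B))"
    by (meson app2H cl_axM.intros(5) hypH list.set_intros qs4_clax)
  hence "qs4_der G (imps [?A] (MImp ?B (MConj ?A ?B)))" by simp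
  hence "qs4_der G (imps [?A] (MBox (MImp ?B (MConj ?A ?B))))" by (intro boxI) (auto simp: stab)
  then show ?case by (simp add: qs4_nec)
next
  case (6 a b) then show ?case by (simp, rule qs4_nec, rule qs4_clax, rule cl_axM.intros)
next
  case (7 a b) then show ?case by (simp, rule qs4_nec, rule qs4_clax, rule cl_axM.intros)
next
  case (8 a c b)
  let ?A = "trQ a" and ?B = "trQ b" and ?C = "trQ c"
  let ?P = "MBox (MImp ?A ?C)" and ?Q = "MBox (MImp ?B ?C)"
  let ?H = "[?P, ?Q, MDisj ?A ?B]"
  have "qs4_der G (imps ?H (MImp ?A ?C))" by (rule appH[OF axT]) (rule hypH, simp)
  moreover have "qs4_der G (imps ?H (MImp ?B ?C))" by (rule appH[OF axT]) (rule hypH, simp)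
  moreover have "qs4_der G (imps ?H (MDisj ?A ?B))" by (rule hypH) simp
  moreover have "qs4_der G (MImp (MImp ?A ?C) (MImp (MImp ?B ?C) (MImp (MDisj ?A ?B) ?C)))"
    by (rule qs4_clax) (rule cl_axM.intros)
  ultimately have "qs4_der G (imps ?H ?C)" by (meson app2H mpH)
  hence "qs4_der G (imps [?P, ?Q] (MImp (MDisj ?A ?B) ?C))" by simp
  hence "qs4_der G (imps [?P, ?Q] (MBox (MImp (MDisj ?A ?B) ?C)))" by (intro boxI) (auto simp: stabB)
  hence "qs4_der G (imps [?P] (MImp ?Q (MBox (MImp (MDisj ?A ?B) ?C))))" by simp
  hence "qs4_der G (imps [?P] (MBox (MImp ?Q (MBox (MImp (MDisj ?A ?B) ?C)))))"
    by (intro boxI) (auto simp: stabB)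
  then show ?case by (simp add: qs4_nec)
next
  case (9 a) then show ?case by (simp, rule qs4_nec, rule qs4_clax, rule cl_axM.intros)
next
  case (10 a t)
  have "qs4_der G (MImp (MAll (trQ a)) (substM (inst0 t) (trQ a)))"
    by (rule qs4_clax) (rule cl_axM.intros)
  hence "qs4_der G (MImp (MBox (MAll (trQ a))) (substM (inst0 t) (trQ a)))"
    using axT trans by blast
  then show ?case by (simp add: tr_subst qs4_nec)
next
  case (11 t a)
  have "qs4_der G (MImp (substM (inst0 t) (trQ a)) (MEx (trQ a)))"
    by (rule qs4_clax) (rule cl_axM.intros)
  then show ?case by (simp add: tr_subst qs4_nec)
qed

lemma axP_tr: "qhc_axP p \<Longrightarrow> qs4_der G (trP p)"
  by (induction rule: qhc_axP.induct)
     (auto simp: PIff_def axT mpI intro: conjI' qs4_clax cl_axM.intros)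

lemma axQ_tr: "qhc_axQ a \<Longrightarrow> qs4_der G (trQ a)"
proof (induction rule: qhc_axQ.induct)
  case (1 a) then show ?case by (simp add: qs4_nec stab)
next
  case (2 p q)
  let ?R = "MBox (MImp (trP p) (trP q))"
  have "qs4_der G (imps [?R] (MImp (MBox (trP p)) (MBox (trP q))))" by (simp add: axKb)
  hence "qs4_der G (imps [?R] (MBox (MImp (MBox (trP p)) (MBox (trP q)))))"
    by (intro boxI) (auto simp: stabB)
  then show ?case by (simp add: qs4_nec)
next
  case 3 then show ?case by (simp add: qs4_nec axT)
qed

lemma main: "qhc_der \<Gamma> A \<Longrightarrow> qs4_der (tr ` \<Gamma>) (tr A)"
proof (induction rule: qhc_der.induct)
  case (qhc_prem A) then show ?case by (simp add: qs4_prem)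
next
  case (qhc_clax p) then show ?case by (simp add: qs4_clax clax_tr)
next
  case (qhc_intax a) then show ?case by (simp add: intax_tr)
next
  case (qhc_axp p) then show ?case by (simp add: axP_tr)
next
  case (qhc_axq a) then show ?case by (simp add: axQ_tr)
next
  case (qhc_mpP p q) then show ?case by (auto intro: qs4_mp)
next
  case (qhc_mpQ a b) then show ?case by simp (meson axT qs4_mp)
next
  case (qhc_genP c p) then show ?case by (simp add: tr_subst qs4_gen)
next
  case (qhc_exP p c) then show ?case by (simp add: tr_subst qs4_ex)
next
  case (qhc_genQ c a)
  have "qs4_der (tr ` \<Gamma>) (MImp (substM Suc (trQ c)) (trQ a))"
    using qhc_genQ.IH by (simp add: tr_subst) (meson axT qs4_mp)
  hence "qs4_der (tr ` \<Gamma>) (imps [trQ c] (MAll (trQ a)))" by (simp add: qs4_gen)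
  hence "qs4_der (tr ` \<Gamma>) (imps [trQ c] (MBox (MAll (trQ a))))" by (intro boxI) (auto simp: stab)
  then show ?case by (simp add: qs4_nec)
next
  case (qhc_exQ a c)
  have "qs4_der (tr ` \<Gamma>) (MImp (trQ a) (substM Suc (trQ c)))"
    using qhc_exQ.IH by (simp add: tr_subst) (meson axT qs4_mp)
  then show ?case by (simp add: qs4_ex qs4_nec)
next
  case (qhc_bang p) then show ?case by (simp add: qs4_nec)
next
  case (qhc_que a) then show ?case by simp
qed

theorem theorem3p1:
  fixes As :: "form list" and A :: form
  assumes "qhc_der (set As) A"
  shows "qs4_der (set (map tr As)) (tr A)"
  using main[OF assms] by simp

end
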